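(* Let $\mathbf{F}_q$ have characteristic $p$ and let $1\le k\le q$. If $p\nmid k$, then $M(k,b,\mathbf{F}_q)=M(k,0,\mathbf{F}_q)=\frac1q(q)_k$ for all $b\in\mathbf{F}_q$. If $p\mid k$, then $M(k,b,\mathbf{F}_q)=q\,M(k-1,b,\mathbf{F}_q^* )$ for all $b\in\mathbf{F}_q$.
   Context: $M(k,b,D)$ denotes the number of ordered $k$-tuples $(x_1,\dots,x_k)$ of pairwise distinct elements of $D\subseteq\mathbf{F}_q$ with $x_1+\dots+x_k=b$. $(x)_k=x(x-1)\cdots(x-k+1)$. *)

theory Defs
  imports Complex_Main "HOL-Library.FuncSet" "HOL-Library.Cardinality"
begin

definition M :: "nat \<Rightarrow> 'a::comm_monoid_add \<Rightarrow> 'a set \<Rightarrow> nat" where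
  "M k b D = card {x \<in> {..<k} \<rightarrow>\<^sub>E D. inj_on x {..<k} \<and> (\<Sum>i<k. x i) = b}"

definition falling :: "real \<Rightarrow> nat \<Rightarrow> real" where
  "falling x k = (\<Prod>i<k. x - real i)"

end

theory Submission
  imports Defs
begin

definition T :: "nat \<Rightarrow> 'a::comm_monoid_add \<Rightarrow> 'a set \<Rightarrow> (nat \<Rightarrow> 'a) set" where
 "T k b D = {x \<in> {..<k} \<rightarrow>\<^sub>E D. inj_on x {..<k} \<and> (\<Sum>i<k. x i) = b}"

lemma M_T: "M k b D = card (T k b D)" by (simp add: M_def T_def)

lemma card_inj:
  "card {x \<in> {..<k} \<rightarrow>\<^sub>E (UNIV::'a::finite set). inj_on x {..<k}} = (\<Prod>i<k. CARD('a) - i)"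
proof (induction k)
  case 0
  then show ?case by simp
next
  case (Suc k)
  define I where "I = (\<lambda>k::nat. {x \<in> {..<k} \<rightarrow>\<^sub>E (UNIV::'a::finite set). inj_on x {..<k}})"
  define S where "S = (SIGMA x:I k. UNIV - x ` {..<k})"
  have eq: "I (Suc k) = (\<lambda>(x,a). x(k:=a)) ` S"
  proof
    show "I (Suc k) \<subseteq> (\<lambda>(x,a). x(k:=a)) ` S"
    proof
      fix x assume x: "x \<in> I (Suc k)"
      have xP: "x \<in> {..<Suc k} \<rightarrow>\<^sub>E UNIV" "inj_on x {..<Suc k}" using x by (simp_all add: I_def)
      have "x = (restrict x {..<k})(k := x k)"
      proof (rule ext)
        fix i show "x i = ((restrict x {..<k})(k := x k)) i"
          using PiE_arb[OF xP(1), of i] by (cases "i < k"; cases "i = k") auto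
      qed
      then have "x = (\<lambda>(x,a). x(k:=a)) (restrict x {..<k}, x k)" by simp
      moreover have "(restrict x {..<k}, x k) \<in> S"
      proof -
        have "restrict x {..<k} \<in> I k"
          unfolding I_def using inj_on_subset[OF xP(2), of "{..<k}"]
          by (simp add: inj_on_def)
        moreover have "x k \<notin> restrict x {..<k} ` {..<k}"
          using xP(2) unfolding inj_on_def by (metis lessThan_iff less_Suc_eq less_irrefl restrict_apply' imageE)
        ultimately show ?thesis by (simp add: S_def)
      qed
      ultimately show "x \<in> (\<lambda>(x,a). x(k:=a)) ` S" by blast
    qed
  next
    show "(\<lambda>(x,a). x(k:=a)) ` S \<subseteq> I (Suc k)"
      by (auto simp: I_def S_def lessThan_Suc PiE_def extensional_def inj_on_def)
  qed
  have inj: "inj_on (\<lambda>(x,a). x(k:=a)) S"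
  proof (rule inj_onI, clarify)
    fix x a y c assume xa: "(x, a) \<in> S" and yc: "(y, c) \<in> S" and e: "x(k := a) = y(k := c)"
    have "x \<in> {..<k} \<rightarrow>\<^sub>E UNIV" "y \<in> {..<k} \<rightarrow>\<^sub>E UNIV" using xa yc by (simp_all add: S_def I_def)
    then have "x k = y k" using PiE_arb[of x "{..<k}" "\<lambda>_. UNIV" k] PiE_arb[of y "{..<k}" "\<lambda>_. UNIV" k] by simp
    have "a = c" using fun_cong[OF e, of k] by simp
    moreover have "x = y"
    proof
      fix i show "x i = y i" using \<open>x k = y k\<close> fun_cong[OF e, of i] by (cases "i = k") auto
    qed
    ultimately show "x = y \<and> a = c" by simp
  qed
  have fin: "finite (I k)" unfolding I_def
    by (rule finite_subset[of _ "{..<k} \<rightarrow>\<^sub>E (UNIV::'a set)"]) (simp_all add: finite_PiE)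
  have cS: "card S = card (I k) * (CARD('a) - k)"
  proof -
    have "card S = (\<Sum>x\<in>I k. card (UNIV - x ` {..<k}))"
      unfolding S_def using fin by (simp add: card_SigmaI)
    also have "\<dots> = (\<Sum>x\<in>I k. CARD('a) - k)"
    proof (rule sum.cong[OF refl])
      fix x assume "x \<in> I k"
      then have "inj_on x {..<k}" by (simp add: I_def)
      then show "card (UNIV - x ` {..<k}) = CARD('a) - k"
        by (simp add: card_Diff_subset card_image)
    qed
    finally show ?thesis by simp
  qed
  have "card (I (Suc k)) = card (I k) * (CARD('a) - k)"
    using eq inj cS by (simp add: card_image)
  then show ?case using Suc.IH by (simp add: I_def mult.commute)
qed


definition sh :: "nat \<Rightarrow> 'a::ab_group_add \<Rightarrow> (nat \<Rightarrow> 'a) \<Rightarrow> nat \<Rightarrow> 'a" where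
  "sh k c x = (\<lambda>i. if i < k then x i + c else undefined)"

lemma sh_mem:
  fixes x :: "nat \<Rightarrow> 'a::comm_ring_1"
  assumes "x \<in> T k b UNIV"
  shows "sh k c x \<in> T k (b + of_nat k * c) UNIV"
proof -
  have x: "x \<in> {..<k} \<rightarrow>\<^sub>E UNIV" "inj_on x {..<k}" "(\<Sum>i<k. x i) = b"
    using assms by (simp_all add: T_def)
  have "sh k c x \<in> {..<k} \<rightarrow>\<^sub>E UNIV" by (simp add: sh_def PiE_def extensional_def)
  moreover have "inj_on (sh k c x) {..<k}" using x(2) by (simp add: inj_on_def sh_def)
  moreover have "(\<Sum>i<k. sh k c x i) = b + of_nat k * c"
  proof -
    have "(\<Sum>i<k. sh k c x i) = (\<Sum>i<k. x i + c)" by (simp add: sh_def)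
    also have "\<dots> = b + of_nat k * c" by (simp add: sum.distrib x(3))
    finally show ?thesis .
  qed
  ultimately show ?thesis by (simp add: T_def)
qed

lemma sh_inv:
  fixes x :: "nat \<Rightarrow> 'a::comm_ring_1"
  assumes "x \<in> T k b UNIV"
  shows "sh k (- c) (sh k c x) = x"
proof (rule ext)
  fix i
  have "x \<in> {..<k} \<rightarrow>\<^sub>E UNIV" using assms by (simp add: T_def)
  then show "sh k (- c) (sh k c x) i = x i"
    using PiE_arb[of x "{..<k}" "\<lambda>_. UNIV" i] by (simp add: sh_def)
qed

lemma card_shift:
  fixes b c :: "'a::comm_ring_1"
  shows "card (T k b UNIV) = card (T k (b + of_nat k * c) UNIV)"
proof -
  have "bij_betw (sh k c) (T k b UNIV) (T k (b + of_nat k * c) UNIV)"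
  proof (rule bij_betw_byWitness[where f' = "sh k (- c)"])
    show "\<forall>a\<in>T k b UNIV. sh k (- c) (sh k c a) = a" using sh_inv by blast
    show "\<forall>a'\<in>T k (b + of_nat k * c) UNIV. sh k c (sh k (- c) a') = a'"
      using sh_inv[of _ k _ "- c"] by simp
    show "sh k c ` T k b UNIV \<subseteq> T k (b + of_nat k * c) UNIV" using sh_mem by blast
    show "sh k (- c) ` T k (b + of_nat k * c) UNIV \<subseteq> T k b UNIV"
      using sh_mem[of _ k "b + of_nat k * c" "- c"] by auto
  qed
  then show ?thesis by (rule bij_betw_same_card)
qed

lemma part1:
  fixes b :: "'a::{field,finite}"
  assumes "\<not> CHAR('a) dvd k" "k \<le> CARD('a)"
  shows "M k b UNIV = M k 0 (UNIV::'a set) \<and>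
         real (M k b UNIV) = falling (real CARD('a)) k / real CARD('a)"
proof -
  have k0: "(of_nat k :: 'a) \<noteq> 0" using assms(1) by (simp add: of_nat_eq_0_iff_char_dvd)
  have eqb: "M k c UNIV = M k 0 (UNIV::'a set)" for c :: 'a
    using card_shift[of k 0 "c / of_nat k"] k0 by (simp add: M_T)
  define I where "I = {x \<in> {..<k} \<rightarrow>\<^sub>E (UNIV::'a set). inj_on x {..<k}}"
  have finI: "finite I" unfolding I_def
    by (rule finite_subset[of _ "{..<k} \<rightarrow>\<^sub>E (UNIV::'a set)"]) (simp_all add: finite_PiE)
  have IU: "I = (\<Union>c\<in>UNIV. T k c UNIV)" unfolding I_def T_def by blast
  have finT: "finite (T k c (UNIV::'a set))" for c
    by (rule finite_subset[OF _ finI]) (unfold I_def T_def, blast)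
  have "card I = (\<Sum>c\<in>UNIV. card (T k c (UNIV::'a set)))"
    unfolding IU
  proof (rule card_UN_disjoint)
    show "finite (UNIV::'a set)" by simp
    show "\<forall>i\<in>(UNIV::'a set). finite (T k i UNIV)" using finT by blast
    show "\<forall>i\<in>(UNIV::'a set). \<forall>j\<in>UNIV. i \<noteq> j \<longrightarrow> T k i UNIV \<inter> T k j UNIV = {}"
    proof (intro ballI impI)
      fix i j :: 'a assume ij: "i \<noteq> j"
      show "T k i UNIV \<inter> T k j UNIV = {}"
      proof (rule equals0I)
        fix x assume "x \<in> T k i UNIV \<inter> T k j UNIV"
        then have "x \<in> T k i UNIV" "x \<in> T k j UNIV" by blast+
        then have "sum x {..<k} = i" "sum x {..<k} = j" unfolding T_def by blast+
        then show False using ij by simp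
      qed
    qed
  qed
  also have "\<dots> = CARD('a) * M k 0 (UNIV::'a set)"
  proof -
    have "(\<Sum>c\<in>UNIV. card (T k c (UNIV::'a set))) = (\<Sum>c\<in>(UNIV::'a set). card (T k 0 (UNIV::'a set)))"
      by (intro sum.cong refl) (rule eqb[unfolded M_T])
    then show ?thesis by (simp add: M_T)
  qed
  finally have c1: "card I = CARD('a) * M k 0 (UNIV::'a set)" .
  have "real (card I) = falling (real CARD('a)) k"
  proof -
    have "real (card I) = (\<Prod>i<k. real (CARD('a) - i))"
      unfolding I_def card_inj by simp
    also have "\<dots> = (\<Prod>i<k. real CARD('a) - real i)"
    proof (rule prod.cong[OF refl])
      fix i assume "i \<in> {..<k}"
      then have "i \<le> CARD('a)" using assms(2) by simp
      then show "real (CARD('a) - i) = real CARD('a) - real i" by (simp add: of_nat_diff)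
    qed
    finally show ?thesis by (simp add: falling_def)
  qed
  then have "real CARD('a) * real (M k 0 (UNIV::'a set)) = falling (real CARD('a)) k"
    using c1 by simp
  moreover have "real CARD('a) > 0" by simp
  ultimately have "real (M k 0 (UNIV::'a set)) = falling (real CARD('a)) k / real CARD('a)"
    by (simp add: eq_divide_eq mult.commute)
  moreover have "M k b UNIV = M k 0 (UNIV::'a set)" by (rule eqb)
  ultimately show ?thesis by simp
qed


lemma part2:
  fixes b :: "'a::{field,finite}"
  assumes "CHAR('a) dvd k" "1 \<le> k"
  shows "M k b UNIV = CARD('a) * M (k - 1) b (UNIV - {0})"
proof -
  obtain m where k: "k = Suc m" using assms(2) by (cases k) auto
  have z: "of_nat m * c + c = (0::'a)" for c :: 'a
  proof -
    have "(of_nat (Suc m) :: 'a) = 0" using assms(1) k of_nat_eq_0_iff_char_dvd[where 'a='a, of "Suc m"] by blast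
    then have "of_nat (Suc m) * c = (0::'a)" by simp
    then show ?thesis by (simp add: algebra_simps)
  qed
  define f where "f = (\<lambda>x::nat \<Rightarrow> 'a. (x m, \<lambda>i. if i < m then x i - x m else undefined))"
  define g where "g = (\<lambda>(c::'a, y::nat \<Rightarrow> 'a). \<lambda>i. if i < m then y i + c else if i = m then c else undefined)"
  define A where "A = T (Suc m) b (UNIV::'a set)"
  define B where "B = (UNIV::'a set) \<times> T m b (UNIV - {0})"
  have "bij_betw f A B"
  proof (rule bij_betw_byWitness[where f' = g])
    show "\<forall>x\<in>A. g (f x) = x"
    proof
      fix x assume "x \<in> A"
      then have xP: "x \<in> {..<Suc m} \<rightarrow>\<^sub>E UNIV" by (simp add: A_def T_def)
      show "g (f x) = x"
      proof (rule ext)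
        fix i show "g (f x) i = x i"
          using PiE_arb[OF xP, of i] by (cases "i < m"; cases "i = m") (auto simp: f_def g_def)
      qed
    qed
    show "\<forall>p\<in>B. f (g p) = p"
    proof
      fix p assume "p \<in> B"
      then obtain c y where p: "p = (c, y)" and yP: "y \<in> {..<m} \<rightarrow>\<^sub>E UNIV - {0}"
        by (auto simp: B_def T_def)
      have "(\<lambda>i. if i < m then g (c, y) i - g (c, y) m else undefined) = y"
      proof (rule ext)
        fix i show "(if i < m then g (c, y) i - g (c, y) m else undefined) = y i"
          using PiE_arb[OF yP, of i] by (cases "i < m") (auto simp: g_def)
      qed
      moreover have "g (c, y) m = c" by (simp add: g_def)
      ultimately show "f (g p) = p" by (simp add: p f_def)
    qed
    show "f ` A \<subseteq> B"
    proof
      fix p assume "p \<in> f ` A"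
      then obtain x where x: "x \<in> A" and p: "p = f x" by blast
      have xP: "x \<in> {..<Suc m} \<rightarrow>\<^sub>E UNIV" "inj_on x {..<Suc m}" "(\<Sum>i<Suc m. x i) = b"
        using x by (simp_all add: A_def T_def)
      define y where "y = (\<lambda>i. if i < m then x i - x m else undefined)"
      have "y \<in> {..<m} \<rightarrow>\<^sub>E UNIV - {0}"
      proof -
        have "x i - x m \<noteq> 0" if "i < m" for i
        proof
          assume "x i - x m = 0"
          then have "x i = x m" by simp
          moreover have "i \<in> {..<Suc m}" "m \<in> {..<Suc m}" using that by auto
          ultimately have "i = m" using xP(2) by (meson inj_on_def)
          then show False using that by simp
        qed
        then show ?thesis by (auto simp: y_def PiE_def extensional_def)
      qed
      moreover have "inj_on y {..<m}"
      proof (rule inj_onI)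
        fix i j assume "i \<in> {..<m}" "j \<in> {..<m}" "y i = y j"
        then have "x i = x j" "i \<in> {..<Suc m}" "j \<in> {..<Suc m}" by (auto simp: y_def)
        then show "i = j" using xP(2) by (meson inj_on_def)
      qed
      moreover have "(\<Sum>i<m. y i) = b"
      proof -
        have "(\<Sum>i<m. y i) = (\<Sum>i<m. x i - x m)" by (simp add: y_def)
        also have "\<dots> = (\<Sum>i<m. x i) - of_nat m * x m" by (simp add: sum_subtractf)
        also have "\<dots> = (\<Sum>i<m. x i) + x m" using z[of "x m"] by (simp add: algebra_simps eq_neg_iff_add_eq_0)
        also have "\<dots> = b" using xP(3) by simp
        finally show ?thesis .
      qed
      ultimately show "p \<in> B" by (simp add: B_def T_def p f_def y_def)
    qed
    show "g ` B \<subseteq> A"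
    proof
      fix x assume "x \<in> g ` B"
      then obtain c y where yP: "y \<in> {..<m} \<rightarrow>\<^sub>E UNIV - {0}" "inj_on y {..<m}" "(\<Sum>i<m. y i) = b"
        and x: "x = g (c, y)"
        by (auto simp: B_def T_def)
      have "x \<in> {..<Suc m} \<rightarrow>\<^sub>E UNIV" by (auto simp: x g_def PiE_def extensional_def)
      moreover have "inj_on x {..<Suc m}"
      proof -
        have "inj_on x {..<m}"
        proof (rule inj_onI)
          fix i j assume "i \<in> {..<m}" "j \<in> {..<m}" "x i = x j"
          then have "y i = y j" "i \<in> {..<m}" "j \<in> {..<m}" by (auto simp: x g_def)
          then show "i = j" using yP(2) by (meson inj_on_def)
        qed
        moreover have "x m \<notin> x ` ({..<m} - {m})"
        proof
          assume "x m \<in> x ` ({..<m} - {m})"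
          then obtain i where "i < m" "x m = x i" by auto
          then have "y i + c = c" by (simp add: x g_def)
          then have "y i = 0" by simp
          moreover have "y i \<in> UNIV - {0}" using yP(1) \<open>i < m\<close> by (auto simp: PiE_def Pi_def)
          ultimately show False by simp
        qed
        ultimately show ?thesis unfolding lessThan_Suc by (simp add: inj_on_insert)
      qed
      moreover have "(\<Sum>i<Suc m. x i) = b"
      proof -
        have "(\<Sum>i<Suc m. x i) = (\<Sum>i<m. x i) + x m" by simp
        also have "\<dots> = (\<Sum>i<m. y i + c) + c" by (simp add: x g_def)
        also have "\<dots> = b + (of_nat m * c + c)" using yP(3) by (simp add: sum.distrib algebra_simps)
        also have "\<dots> = b" using z[of c] by simp
        finally show ?thesis .
      qed
      ultimately show "x \<in> A" by (simp add: A_def T_def)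
    qed
  qed
  then have "card A = card B" by (rule bij_betw_same_card)
  then show ?thesis by (simp add: A_def B_def M_T k card_cartesian_product)
qed

theorem lemma2p3:
  fixes k :: nat
  assumes "1 \<le> k" and "k \<le> CARD('a)"
  shows "(\<not> CHAR('a::{field,finite}) dvd k \<longrightarrow>
            (\<forall>b::'a. M k b UNIV = M k 0 (UNIV::'a set) \<and>
                     real (M k b UNIV) = falling (real CARD('a)) k / real CARD('a)))
       \<and> (CHAR('a) dvd k \<longrightarrow>
            (\<forall>b::'a. M k b UNIV = CARD('a) * M (k - 1) b (UNIV - {0})))"
  using part1[OF _ assms(2)] part2[OF _ assms(1)] by blast

end
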